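(* Let $\mathbb{K}\in\{\mathbb{R},\mathbb{C}\}$, $\mathbf{R}_U\in\mathbb{K}^{n\times n}$ self-adjoint positive definite, $U:=\mathbb{K}^n$ with $\langle\mathbf{x},\mathbf{y}\rangle_U:=\langle\mathbf{R}_U\mathbf{x},\mathbf{y}\rangle$, norm $\|\cdot\|_U$, and dual norm $\|\mathbf{y}\|_{U'}:=\langle\mathbf{y},\mathbf{R}_U^{-1}\mathbf{y}\rangle^{1/2}$. Fix $\mu$, $\mathbf{A}(\mu)\in\mathbb{K}^{n\times n}$, $\mathbf{b}(\mu)\in\mathbb{K}^n$, $\mathbf{u}(\mu)$ with $\mathbf{A}(\mu)\mathbf{u}(\mu)=\mathbf{b}(\mu)$, a subspace $U_r\subseteq U$ and $\mathbf{\Theta}\in\mathbb{K}^{k\times n}$. Define $\|\mathbf{y}\|_{U_r'}:=\max_{\mathbf{w}\in U_r\setminus\{\mathbf{0}\}}|\langle\mathbf{y},\mathbf{w}\rangle|/\|\mathbf{w}\|_U$ and $\|\mathbf{y}\|_{U_r'}^{\mathbf{\Theta}}:=\max_{\mathbf{x}\in U_r\setminus\{\mathbf{0}\}}|\langle\mathbf{\Theta}\mathbf{R}_U^{-1}\mathbf{y},\mathbf{\Theta}\mathbf{x}\rangle|/\|\mathbf{\Theta}\mathbf{x}\|$; $\alpha_r(\mu):=\min_{\mathbf{x}\in U_r\setminus\{\mathbf{0}\}}\|\mathbf{A}(\mu)\mathbf{x}\|_{U_r'}/\|\mathbf{x}\|_U$, $\beta_r(\mu):=\max_{\mathbf{x}\in(\mathrm{span}\{\mathbf{u}(\mu)\}+U_r)\setminus\{\mathbf{0}\}}\|\mathbf{A}(\mu)\mathbf{x}\|_{U_r'}/\|\mathbf{x}\|_U$,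 $\beta(\mu):=\max_{\mathbf{x}\in U\setminus\{\mathbf{0}\}}\|\mathbf{A}(\mu)\mathbf{x}\|_{U'}/\|\mathbf{x}\|_U$; $\alpha_r^{\mathbf{\Theta}}(\mu)$ and $\beta_r^{\mathbf{\Theta}}(\mu)$ defined as $\alpha_r(\mu),\beta_r(\mu)$ with $\|\cdot\|_{U_r'}$ replaced by $\|\cdot\|_{U_r'}^{\mathbf{\Theta}}$ (denominators still $\|\mathbf{x}\|_U$); and $$a_r(\mu):=\max_{\mathbf{w}\in U_r\setminus\{\mathbf{0}\}}\frac{\|\mathbf{A}(\mu)\mathbf{w}\|_{U'}}{\|\mathbf{A}(\mu)\mathbf{w}\|_{U_r'}}.$$ Let $Y_r(\mu):=U_r+\mathrm{span}\{\mathbf{R}_U^{-1}(\mathbf{b}(\mu)-\mathbf{A}(\mu)\mathbf{x}):\mathbf{x}\in U_r\}$. If for some $\varepsilon\in[0,1)$, $|\langle\mathbf{x},\mathbf{y}\rangle_U-\langle\mathbf{\Theta}\mathbf{x},\mathbf{\Theta}\mathbf{y}\rangle|\le\varepsilon\|\mathbf{x}\|_U\|\mathbf{y}\|_U$ for all $\mathbf{x},\mathbf{y}\in Y_r(\mu)$, then $$\alpha_r^{\mathbf{\Theta}}(\mu)\ge\frac{1}{\sqrt{1+\varepsilon}}(1-\varepsilon a_r(\mu))\alpha_r(\mu),\qquad\beta_r^{\mathbf{\Theta}}(\mu)\le\frac{1}{\sqrt{1-\varepsilon}}(\beta_r(\mu)+\varepsilon\beta(\mu)).$$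
   Context: $\langle\mathbf{x},\mathbf{y}\rangle=\mathbf{x}^{\mathrm{H}}\mathbf{y}$ is the canonical inner product and $\|\cdot\|$ the Euclidean norm. *)

theory Defs
  imports "HOL-Analysis.Analysis"
begin

text \<open>A field K with K = R or K = C: a real normed field equipped with its
  conjugation (identity on R, complex conjugation on C). By Gelfand-Mazur these
  axioms only admit R and C (up to isomorphism); both are instantiated below.\<close>

class has_cj =
  fixes cj :: "'a \<Rightarrow> 'a"

class rc_field = real_normed_field + has_cj +
  assumes cj_add: "cj (x + y) = cj x + cj y"
    and cj_mult: "cj (x * y) = cj x * cj y"
    and cj_cj: "cj (cj x) = x"
    and cj_of_real: "cj (scaleR r 1) = scaleR r 1"
    and cj_mult_self: "cj x * x = scaleR ((norm x)\<^sup>2) 1"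

instantiation real :: has_cj
begin
definition cj_real :: "real \<Rightarrow> real" where "cj_real x = x"
instance ..
end

instance real :: rc_field
proof
  fix x y :: real and r :: real
  show "cj (x + y) = cj x + cj y" "cj (x * y) = cj x * cj y" "cj (cj x) = x"
    "cj (scaleR r 1) = scaleR r (1::real)" by (simp_all add: cj_real_def)
  show "cj x * x = scaleR ((norm x)\<^sup>2) 1"
    by (simp add: cj_real_def power2_eq_square)
qed

instantiation complex :: has_cj
begin
definition cj_complex :: "complex \<Rightarrow> complex" where "cj_complex z = cnj z"
instance ..
end

instance complex :: rc_field
proof
  fix x y :: complex and r :: real
  show "cj (x + y) = cj x + cj y" "cj (x * y) = cj x * cj y" "cj (cj x) = x"
    "cj (scaleR r 1) = scaleR r (1::complex)" by (simp_all add: cj_complex_def)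
  show "cj x * x = scaleR ((norm x)\<^sup>2) 1"
    by (simp only: cj_complex_def scaleR_conv_of_real mult_1_right complex_norm_square mult.commute mult_1_left)
qed

definition inn :: "'a::rc_field ^ 'n \<Rightarrow> 'a ^ 'n \<Rightarrow> 'a" where
  "inn x y = (\<Sum>i\<in>UNIV. cj (x $ i) * y $ i)"

definition self_adjoint :: "'a::rc_field ^ 'n ^ 'n \<Rightarrow> bool" where
  "self_adjoint M \<longleftrightarrow> (\<forall>i j. M $ i $ j = cj (M $ j $ i))"

definition pos_def :: "'a::rc_field ^ 'n ^ 'n \<Rightarrow> bool" where
  "pos_def M \<longleftrightarrow> (\<forall>x. x \<noteq> 0 \<longrightarrow> (\<exists>r>0. inn x (M *v x) = of_real r))"

text \<open><x,y>_U = <R x, y>, and ||x||_U = <x,x>_U^(1/2) (a nonnegative real,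
  written via its modulus).\<close>
definition innU :: "'a::rc_field ^ 'n ^ 'n \<Rightarrow> 'a ^ 'n \<Rightarrow> 'a ^ 'n \<Rightarrow> 'a" where
  "innU R x y = inn (R *v x) y"

definition normU :: "'a::rc_field ^ 'n ^ 'n \<Rightarrow> 'a ^ 'n \<Rightarrow> real" where
  "normU R x = sqrt (norm (innU R x x))"

definition dualU :: "'a::rc_field ^ 'n ^ 'n \<Rightarrow> 'a ^ 'n \<Rightarrow> real" where
  "dualU R y = sqrt (norm (inn y (matrix_inv R *v y)))"

definition dualUr :: "'a::rc_field ^ 'n ^ 'n \<Rightarrow> ('a ^ 'n) set \<Rightarrow> 'a ^ 'n \<Rightarrow> real" where
  "dualUr R Ur y = (SUP w\<in>Ur - {0}. norm (inn y w) / normU R w)"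

definition dualUrT :: "'a::rc_field ^ 'n ^ 'n \<Rightarrow> 'a ^ 'n ^ 'k \<Rightarrow> ('a ^ 'n) set \<Rightarrow> 'a ^ 'n \<Rightarrow> real" where
  "dualUrT R Th Ur y =
     (SUP x\<in>Ur - {0}. norm (inn (Th *v (matrix_inv R *v y)) (Th *v x)) / norm (Th *v x))"

definition msum :: "('a::rc_field ^ 'n) set \<Rightarrow> ('a ^ 'n) set \<Rightarrow> ('a ^ 'n) set" where
  "msum S T = {x + y | x y. x \<in> S \<and> y \<in> T}"

definition alpha_r :: "'a::rc_field ^ 'n ^ 'n \<Rightarrow> 'a ^ 'n ^ 'n \<Rightarrow> ('a ^ 'n) set \<Rightarrow> real" where
  "alpha_r R A Ur = (INF x\<in>Ur - {0}. dualUr R Ur (A *v x) / normU R x)"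

definition beta_r :: "'a::rc_field ^ 'n ^ 'n \<Rightarrow> 'a ^ 'n ^ 'n \<Rightarrow> 'a ^ 'n \<Rightarrow> ('a ^ 'n) set \<Rightarrow> real" where
  "beta_r R A u Ur = (SUP x\<in>msum (vec.span {u}) Ur - {0}. dualUr R Ur (A *v x) / normU R x)"

definition beta_full :: "'a::rc_field ^ 'n ^ 'n \<Rightarrow> 'a ^ 'n ^ 'n \<Rightarrow> real" where
  "beta_full R A = (SUP x\<in>UNIV - {0}. dualU R (A *v x) / normU R x)"

definition alpha_rT :: "'a::rc_field ^ 'n ^ 'n \<Rightarrow> 'a ^ 'n ^ 'k \<Rightarrow> 'a ^ 'n ^ 'n \<Rightarrow> ('a ^ 'n) set \<Rightarrow> real" where
  "alpha_rT R Th A Ur = (INF x\<in>Ur - {0}. dualUrT R Th Ur (A *v x) / normU R x)"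

definition beta_rT :: "'a::rc_field ^ 'n ^ 'n \<Rightarrow> 'a ^ 'n ^ 'k \<Rightarrow> 'a ^ 'n ^ 'n \<Rightarrow> 'a ^ 'n \<Rightarrow> ('a ^ 'n) set \<Rightarrow> real" where
  "beta_rT R Th A u Ur = (SUP x\<in>msum (vec.span {u}) Ur - {0}. dualUrT R Th Ur (A *v x) / normU R x)"

definition a_r :: "'a::rc_field ^ 'n ^ 'n \<Rightarrow> 'a ^ 'n ^ 'n \<Rightarrow> ('a ^ 'n) set \<Rightarrow> real" where
  "a_r R A Ur = (SUP w\<in>Ur - {0}. dualU R (A *v w) / dualUr R Ur (A *v w))"

definition Y_r :: "'a::rc_field ^ 'n ^ 'n \<Rightarrow> 'a ^ 'n ^ 'n \<Rightarrow> 'a ^ 'n \<Rightarrow> ('a ^ 'n) set \<Rightarrow> ('a ^ 'n) set" where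
  "Y_r R A b Ur = msum Ur (vec.span {matrix_inv R *v (b - A *v x) | x. x \<in> Ur})"

end

theory Submission
  imports Defs
begin


lemma cj_zero[simp]: "cj (0::'a::rc_field) = 0"
proof -
  have "cj (0::'a) = cj 0 + cj 0" by (metis add_0 cj_add)
  thus ?thesis by simp
qed

lemma cj_ofreal[simp]: "cj (of_real r :: 'a::rc_field) = of_real r"
  by (simp add: of_real_def cj_of_real)

lemma cj_one[simp]: "cj (1::'a::rc_field) = 1"
  using cj_ofreal[of 1] by simp

lemma cj_uminus[simp]: "cj (- x::'a::rc_field) = - cj x"
proof -
  have "cj (x + - x) = 0" by simp
  thus ?thesis by (simp only: cj_add) (simp add: add_eq_0_iff)
qed

lemma cj_diff[simp]: "cj (x - y::'a::rc_field) = cj x - cj y"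
  by (metis cj_add cj_uminus diff_conv_add_uminus)

lemma cj_plus[simp]: "cj (x + y::'a::rc_field) = cj x + cj y" by (rule cj_add)
lemma cj_times[simp]: "cj (x * y::'a::rc_field) = cj x * cj y" by (rule cj_mult)
lemma cj_cj_simp[simp]: "cj (cj (x::'a::rc_field)) = x" by (rule cj_cj)

lemma cj_sum: "cj (sum f S :: 'a::rc_field) = sum (\<lambda>i. cj (f i)) S"
  by (induction S rule: infinite_finite_induct) auto

lemma cj_self: "cj x * x = (of_real ((norm x)\<^sup>2) :: 'a::rc_field)"
  by (simp add: cj_mult_self of_real_def)

lemma self_cj: "x * cj x = (of_real ((norm x)\<^sup>2) :: 'a::rc_field)"
  by (metis cj_self mult.commute)

lemma norm_cj[simp]: "norm (cj (x::'a::rc_field)) = norm x"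
proof (cases "x = 0")
  case False
  have "norm (cj x) * norm x = (norm x)\<^sup>2"
    by (metis cj_self norm_mult norm_of_real abs_of_nonneg zero_le_power2)
  with False show ?thesis by (simp add: power2_eq_square)
qed simp

lemma inn_add_left: "inn (x + y) z = inn x z + inn y z"
  by (simp add: inn_def distrib_right sum.distrib)
lemma inn_add_right: "inn x (y + z) = inn x y + inn x z"
  by (simp add: inn_def distrib_left sum.distrib)
lemma inn_diff_left: "inn (x - y) z = inn x z - inn y z"
  by (simp add: inn_def left_diff_distrib sum_subtractf)
lemma inn_diff_right: "inn x (y - z) = inn x y - inn x z"
  by (simp add: inn_def right_diff_distrib sum_subtractf)
lemma inn_scale_left: "inn (c *s x) y = cj c * inn x y"
  by (simp add: inn_def sum_distrib_left mult.assoc)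
lemma inn_scale_right: "inn x (c *s y) = c * inn x y"
  by (simp add: inn_def sum_distrib_left mult_ac)
lemma inn_zero_left[simp]: "inn 0 y = 0" by (simp add: inn_def)
lemma inn_zero_right[simp]: "inn x 0 = 0" by (simp add: inn_def)
lemma inn_sym: "inn y x = cj (inn x y)"
  by (simp add: inn_def cj_sum mult.commute)

lemma inn_self: "inn x x = of_real ((norm x)\<^sup>2)"
proof -
  have "inn x x = (\<Sum>i\<in>UNIV. of_real ((norm (x$i))\<^sup>2))" by (simp add: inn_def cj_self)
  also have "\<dots> = of_real (\<Sum>i\<in>UNIV. (norm (x$i))\<^sup>2)" by simp
  also have "(\<Sum>i\<in>UNIV. (norm (x$i))\<^sup>2) = (norm x)\<^sup>2"
    by (simp add: norm_vec_def L2_set_def sum_nonneg)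
  finally show ?thesis .
qed

lemma mv_scale: "M *v (c *s x) = c *s (M *v (x::'a::comm_ring_1^'n))"
  by (simp add: vec_eq_iff matrix_vector_mult_def sum_distrib_left mult_ac)

lemma inn_selfadj: assumes "self_adjoint R" shows "inn (R *v x) y = inn x (R *v y)"
proof -
  have sj: "\<And>i j. R$j$i = cj (R$i$j)" using assms unfolding self_adjoint_def by blast
  have "inn (R *v x) y = (\<Sum>i\<in>UNIV. \<Sum>j\<in>UNIV. cj (R$i$j) * cj (x$j) * y$i)"
    unfolding inn_def matrix_vector_mult_def by (simp only: vec_lambda_beta cj_sum cj_times sum_distrib_right)
  also have "\<dots> = (\<Sum>j\<in>UNIV. \<Sum>i\<in>UNIV. cj (R$i$j) * cj (x$j) * y$i)"
    by (rule sum.swap)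
  also have "\<dots> = (\<Sum>j\<in>UNIV. \<Sum>i\<in>UNIV. cj (x$j) * (R$j$i * y$i))"
    by (simp only: sj[symmetric] mult.assoc mult.left_commute)
  also have "\<dots> = inn x (R *v y)"
    unfolding inn_def matrix_vector_mult_def by (simp only: vec_lambda_beta sum_distrib_left)
  finally show ?thesis .
qed



lemma innU_add_left: "innU R (x + y) z = innU R x z + innU R y z"
  by (simp add: innU_def matrix_vector_right_distrib inn_add_left)
lemma innU_add_right: "innU R x (y + z) = innU R x y + innU R x z"
  by (simp add: innU_def inn_add_right)
lemma innU_diff_left: "innU R (x - y) z = innU R x z - innU R y z"
  by (simp add: innU_def matrix_vector_mult_diff_distrib inn_diff_left)
lemma innU_diff_right: "innU R x (y - z) = innU R x y - innU R x z"
  by (simp add: innU_def inn_diff_right)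
lemma innU_scale_left: "innU R (c *s x) y = cj c * innU R x y"
  by (simp add: innU_def mv_scale inn_scale_left)
lemma innU_scale_right: "innU R x (c *s y) = c * innU R x y"
  by (simp add: innU_def inn_scale_right)
lemma innU_sym: "self_adjoint R \<Longrightarrow> innU R y x = cj (innU R x y)"
  by (simp add: innU_def inn_selfadj inn_sym[of "R *v x"])

lemma innU_self:
  assumes "self_adjoint R" "pos_def R"
  shows "innU R x x = of_real ((normU R x)\<^sup>2) \<and> (x \<noteq> 0 \<longrightarrow> normU R x > 0)"
proof (cases "x = 0")
  case True thus ?thesis by (simp add: innU_def normU_def)
next
  case False
  then obtain r where r: "r > 0" "inn x (R *v x) = of_real r" using assms(2) pos_def_def by blast
  have "innU R x x = cj (inn x (R *v x))" unfolding innU_def by (rule inn_sym)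
  hence e: "innU R x x = of_real r" using r(2) by simp
  have "normU R x = sqrt r" unfolding normU_def e using r(1) by simp
  thus ?thesis using e r(1) False by simp
qed

lemma CS_U:
  assumes "self_adjoint R" "pos_def R"
  shows "norm (innU R x y) \<le> normU R x * normU R y"
proof (cases "x = 0")
  case True thus ?thesis by (simp add: innU_def normU_def)
next
  case False
  define a where "a = (normU R x)\<^sup>2"
  define t where "t = innU R x y"
  define z where "z = (of_real a) *s y - t *s x"
  have a: "a > 0" using innU_self[OF assms, of x] False a_def by simp
  have xx: "innU R x x = of_real a" using innU_self[OF assms] a_def by blast
  have yy: "innU R y y = of_real ((normU R y)\<^sup>2)" using innU_self[OF assms] by blast
  have yx: "innU R y x = cj t" using innU_sym[OF assms(1)] t_def by blast
  have e1: "innU R z z = innU R (of_real a *s y) (of_real a *s y) - innU R (t *s x) (of_real a *s y)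
        - (innU R (of_real a *s y) (t *s x) - innU R (t *s x) (t *s x))"
    unfolding z_def by (simp only: innU_diff_left innU_diff_right)
  also have "\<dots> = of_real a * (of_real a * innU R y y) - of_real a * (cj t * innU R x y)
        - (t * (of_real a * innU R y x) - t * (cj t * innU R x x))"
    by (simp only: innU_scale_left innU_scale_right cj_ofreal)
  also have "\<dots> = of_real a * (of_real a * of_real ((normU R y)\<^sup>2)) - of_real a * (cj t * t)
        - (t * (of_real a * cj t) - t * (cj t * of_real a))"
    unfolding yy yx xx t_def[symmetric] by (rule refl)
  also have "\<dots> = of_real a * (of_real a * of_real ((normU R y)\<^sup>2)) - of_real a * (t * cj t)"
    by (simp add: algebra_simps)
  also have "\<dots> = of_real (a * (a * (normU R y)\<^sup>2 - (norm t)\<^sup>2))"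
    by (simp only: self_cj of_real_mult of_real_diff right_diff_distrib)
  finally have "of_real ((normU R z)\<^sup>2) = (of_real (a * (a * (normU R y)\<^sup>2 - (norm t)\<^sup>2)) :: 'a)"
    using innU_self[OF assms, of z] by simp
  hence "(normU R z)\<^sup>2 = a * (a * (normU R y)\<^sup>2 - (norm t)\<^sup>2)" using of_real_eq_iff by blast
  hence "0 \<le> a * (a * (normU R y)\<^sup>2 - (norm t)\<^sup>2)" by (metis zero_le_power2)
  hence "(norm t)\<^sup>2 \<le> a * (normU R y)\<^sup>2" using a by (simp add: zero_le_mult_iff)
  also have "\<dots> = (normU R x * normU R y)\<^sup>2" by (simp add: a_def power_mult_distrib)
  finally have "(norm t)\<^sup>2 \<le> (normU R x * normU R y)\<^sup>2" .
  moreover have "0 \<le> normU R x * normU R y" by (simp add: normU_def)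
  ultimately show ?thesis unfolding t_def using power2_le_imp_le by blast
qed

lemma sa_mat1: "self_adjoint (mat 1 :: 'a::rc_field^'n^'n)"
  by (simp add: self_adjoint_def mat_def)

lemma pd_mat1: "pos_def (mat 1 :: 'a::rc_field^'n^'n)"
  unfolding pos_def_def
proof (intro allI impI)
  fix x :: "'a^'n" assume "x \<noteq> 0"
  show "\<exists>r>0. inn x (mat 1 *v x) = of_real r"
    by (rule exI[of _ "(norm x)\<^sup>2"]) (simp add: inn_self \<open>x \<noteq> 0\<close> del: of_real_power)
qed

lemma normU_mat1: "normU (mat 1) x = norm x"
  unfolding normU_def innU_def matrix_vector_mul_lid inn_self norm_of_real by simp

lemma CS_E: "norm (inn x y) \<le> norm x * norm (y :: 'a::rc_field^'n)"
  using CS_U[OF sa_mat1 pd_mat1, of x y] by (simp add: normU_mat1 innU_def)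



lemma nthle0: "norm (v$j) \<le> norm (v::'a::real_normed_vector^'n)"
  unfolding norm_vec_def by (rule member_le_L2_set) simp_all

lemma mat_bound: "norm (M *v v) \<le> (\<Sum>i\<in>UNIV. \<Sum>j\<in>UNIV. norm (M$i$j)) * norm (v::'a::rc_field^'n)"
proof -
  have "norm (M *v v) \<le> (\<Sum>i\<in>UNIV. norm ((M *v v)$i))"
    unfolding norm_vec_def by (rule L2_set_le_sum) simp
  also have "\<dots> \<le> (\<Sum>i\<in>UNIV. (\<Sum>j\<in>UNIV. norm (M$i$j)) * norm v)"
  proof (rule sum_mono)
    fix i
    have "norm ((M *v v)$i) \<le> (\<Sum>j\<in>UNIV. norm (M$i$j * v$j))"
      unfolding matrix_vector_mult_def by (simp add: norm_sum)
    also have "\<dots> \<le> (\<Sum>j\<in>UNIV. norm (M$i$j) * norm v)"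
      by (rule sum_mono) (simp add: norm_mult mult_left_mono[OF nthle0])
    finally show "norm ((M *v v)$i) \<le> (\<Sum>j\<in>UNIV. norm (M$i$j)) * norm v"
      by (simp add: sum_distrib_right)
  qed
  finally show ?thesis by (simp add: sum_distrib_right)
qed

lemma nthle: "norm (v$j) \<le> norm (v::'a::real_normed_vector^'n)"
  unfolding norm_vec_def by (rule member_le_L2_set) simp_all

lemma mat_bound_nonneg: "0 \<le> (\<Sum>i\<in>UNIV. \<Sum>j\<in>UNIV. norm (M$i$j))"
  by (simp add: sum_nonneg)

lemma inn_axis: "inn (axis i 1) w = w $ i"
proof -
  have "inn (axis i 1) w = (\<Sum>j\<in>UNIV. if j = i then w$j else 0)"
    unfolding inn_def axis_def by (rule sum.cong) auto
  thus ?thesis by simp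
qed

context
  fixes R :: "'a::rc_field^'n^'n"
  assumes sa: "self_adjoint R" and pd: "pos_def R"
begin

lemma R_inj: "inj ((*v) R)"
proof (rule injI)
  fix x y assume e: "R *v x = R *v y"
  show "x = y"
  proof (rule ccontr)
    assume "x \<noteq> y"
    then obtain r where "r > 0" "inn (x - y) (R *v (x - y)) = of_real r"
      using pd unfolding pos_def_def by (metis eq_iff_diff_eq_0)
    moreover have "R *v (x - y) = 0" using e by (simp add: matrix_vector_mult_diff_distrib)
    ultimately show False by simp
  qed
qed

lemma R_inv: "R *v (matrix_inv R *v y) = y"
proof -
  have "det (matrix ((*v) R)) \<noteq> 0"
    using det_nz_iff_inj_gen[OF matrix_vector_mul_linear_gen] R_inj by blast
  hence "invertible R" using invertible_det_nz
    by (metis matrix_of_matrix_vector_mul eta_contract_eq)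
  hence "R ** matrix_inv R = mat 1" unfolding invertible_def matrix_inv_def
    by (metis (mono_tags, lifting) someI_ex)
  thus ?thesis by (simp add: matrix_vector_mul_assoc)
qed

lemma K1: "dualU R y = normU R (matrix_inv R *v y)"
  by (simp add: dualU_def normU_def innU_def R_inv)

lemma K2: "inn y w = innU R (matrix_inv R *v y) w"
  by (simp add: innU_def R_inv)

lemma K3: "norm (inn y w) \<le> dualU R y * normU R w"
  using CS_U[OF sa pd] K1 K2 by metis

lemma normU_pos: "x \<noteq> 0 \<Longrightarrow> normU R x > 0"
  using innU_self[OF sa pd] by blast

lemma normU_nonneg: "normU R x \<ge> 0"
  by (simp add: normU_def)

lemma normU_upper: "normU R v \<le> sqrt (\<Sum>i\<in>UNIV. \<Sum>j\<in>UNIV. norm (R$i$j)) * norm v"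
proof -
  let ?C = "\<Sum>i\<in>UNIV. \<Sum>j\<in>UNIV. norm (R$i$j)"
  have "norm (innU R v v) \<le> norm (R *v v) * norm v" unfolding innU_def by (rule CS_E)
  also have "\<dots> \<le> ?C * norm v * norm v" by (simp add: mat_bound mult_right_mono)
  finally have "normU R v \<le> sqrt (?C * (norm v)\<^sup>2)"
    unfolding normU_def by (simp add: power2_eq_square mult.assoc)
  also have "\<dots> = sqrt ?C * norm v" by (simp add: real_sqrt_mult)
  finally show ?thesis .
qed

lemma norm_lower: "norm w \<le> (\<Sum>i\<in>UNIV. dualU R (axis i 1)) * normU R w"
proof -
  have "norm w \<le> (\<Sum>i\<in>UNIV. norm (w$i))"
    unfolding norm_vec_def by (rule L2_set_le_sum) simp
  also have "\<dots> \<le> (\<Sum>i\<in>UNIV. dualU R (axis i 1) * normU R w)"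
    by (rule sum_mono) (metis K3 inn_axis)
  finally show ?thesis by (simp add: sum_distrib_right)
qed

lemma dualU_nonneg: "dualU R y \<ge> 0" by (simp add: dualU_def)

lemma K4: "\<exists>K\<ge>0. \<forall>x. dualU R (A *v x) \<le> K * normU R x"
proof -
  let ?CR = "\<Sum>i\<in>UNIV. \<Sum>j\<in>UNIV. norm (R$i$j)"
  let ?M = "matrix_inv R ** A"
  let ?CM = "\<Sum>i\<in>UNIV. \<Sum>j\<in>UNIV. norm (?M$i$j)"
  let ?CL = "\<Sum>i\<in>UNIV. dualU R (axis i 1)"
  have CL: "?CL \<ge> 0" by (simp add: sum_nonneg dualU_nonneg)
  have "\<forall>x. dualU R (A *v x) \<le> (sqrt ?CR * ?CM * ?CL) * normU R x"
  proof
    fix x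
    have "dualU R (A *v x) = normU R (?M *v x)" by (simp add: K1 matrix_vector_mul_assoc)
    also have "\<dots> \<le> sqrt ?CR * norm (?M *v x)" by (rule normU_upper)
    also have "\<dots> \<le> sqrt ?CR * (?CM * norm x)" by (rule mult_left_mono[OF mat_bound]) (simp add: sum_nonneg)
    also have "\<dots> \<le> sqrt ?CR * (?CM * (?CL * normU R x))"
      by (intro mult_left_mono norm_lower) (simp_all add: mat_bound_nonneg sum_nonneg)
    finally show "dualU R (A *v x) \<le> (sqrt ?CR * ?CM * ?CL) * normU R x" by (simp add: mult_ac)
  qed
  moreover have "sqrt ?CR * ?CM * ?CL \<ge> 0" using CL by (simp add: mat_bound_nonneg sum_nonneg)
  ultimately show ?thesis by blast
qed

end


context
  fixes R :: "'a::rc_field^'n^'n" and Ur :: "('a^'n) set"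
  assumes sa: "self_adjoint R" and pd: "pos_def R"
    and sub: "vec.subspace Ur" and ne: "Ur \<noteq> {0}"
begin

lemma W_ne: "Ur - {0} \<noteq> {}"
  using ne vec.subspace_0[OF sub] by blast

lemma DUr_bdd: "bdd_above ((\<lambda>w. norm (inn y w) / normU R w) ` (Ur - {0}))"
proof (rule bdd_aboveI2)
  fix w assume "w \<in> Ur - {0}"
  hence p: "normU R w > 0" using normU_pos[OF sa pd] by blast
  show "norm (inn y w) / normU R w \<le> dualU R y"
    using K3[OF sa pd, of y w] p by (simp add: pos_divide_le_eq)
qed

lemma DUr_upper: "w \<in> Ur - {0} \<Longrightarrow> norm (inn y w) / normU R w \<le> dualUr R Ur y"
  unfolding dualUr_def by (rule cSUP_upper[OF _ DUr_bdd])

lemma DUr_least: "(\<And>w. w \<in> Ur - {0} \<Longrightarrow> norm (inn y w) / normU R w \<le> c) \<Longrightarrow> dualUr R Ur y \<le> c"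
  unfolding dualUr_def by (rule cSUP_least[OF W_ne])

lemma DUr_le: "dualUr R Ur y \<le> dualU R y"
proof (rule DUr_least)
  fix w assume "w \<in> Ur - {0}"
  hence p: "normU R w > 0" using normU_pos[OF sa pd] by blast
  show "norm (inn y w) / normU R w \<le> dualU R y"
    using K3[OF sa pd, of y w] p by (simp add: pos_divide_le_eq)
qed

lemma DUr_nonneg: "dualUr R Ur y \<ge> 0"
proof -
  obtain w where "w \<in> Ur - {0}" using W_ne by blast
  from DUr_upper[OF this, of y] show ?thesis
    by (meson divide_nonneg_nonneg norm_ge_zero normU_nonneg[OF sa pd] order_trans)
qed

lemma DUrT_bdd: "bdd_above ((\<lambda>w. norm (inn (Th *v (matrix_inv R *v y)) (Th *v w)) / norm (Th *v w)) ` (Ur - {0}))"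
proof (rule bdd_aboveI2)
  fix w
  show "norm (inn (Th *v (matrix_inv R *v y)) (Th *v w)) / norm (Th *v w) \<le> norm (Th *v (matrix_inv R *v y))"
  proof (cases "norm (Th *v w) = 0")
    case False
    thus ?thesis using CS_E[of "Th *v (matrix_inv R *v y)" "Th *v w"]
      by (simp add: pos_divide_le_eq)
  qed simp
qed

lemma DUrT_upper: "w \<in> Ur - {0} \<Longrightarrow>
  norm (inn (Th *v (matrix_inv R *v y)) (Th *v w)) / norm (Th *v w) \<le> dualUrT R Th Ur y"
  unfolding dualUrT_def by (rule cSUP_upper[OF _ DUrT_bdd])

lemma DUrT_least: "(\<And>w. w \<in> Ur - {0} \<Longrightarrow>
  norm (inn (Th *v (matrix_inv R *v y)) (Th *v w)) / norm (Th *v w) \<le> c) \<Longrightarrow> dualUrT R Th Ur y \<le> c"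
  unfolding dualUrT_def by (rule cSUP_least[OF W_ne])

lemma DUrT_nonneg: "dualUrT R Th Ur y \<ge> 0"
proof -
  obtain w where "w \<in> Ur - {0}" using W_ne by blast
  from DUrT_upper[OF this, of Th y] show ?thesis
    by (meson divide_nonneg_nonneg norm_ge_zero order_trans)
qed

end


theorem proposition4p2:
  fixes R A :: "'a::rc_field ^ 'n ^ 'n"
    and Th :: "'a ^ 'n ^ 'k"
    and b u :: "'a ^ 'n"
    and Ur :: "('a ^ 'n) set"
    and eps :: real
  assumes "self_adjoint R" and "pos_def R"
    and "A *v u = b"
    and "vec.subspace Ur" and "Ur \<noteq> {0}"
    and "0 \<le> eps" and "eps < 1"
    and "\<forall>x\<in>Y_r R A b Ur. \<forall>y\<in>Y_r R A b Ur.
           norm (innU R x y - inn (Th *v x) (Th *v y)) \<le> eps * normU R x * normU R y"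
  shows "alpha_rT R Th A Ur \<ge> 1 / sqrt (1 + eps) * (1 - eps * a_r R A Ur) * alpha_r R A Ur \<and>
         beta_rT R Th A u Ur \<le> 1 / sqrt (1 - eps) * (beta_r R A u Ur + eps * beta_full R A)"
proof -
  note sa = assms(1) and pd = assms(2) and sub = assms(4) and ne = assms(5)
  note H = assms(8)
  define Ri where "Ri = matrix_inv R"
  define Y where "Y = Y_r R A b Ur"
  define S where "S = {matrix_inv R *v (b - A *v x) | x. x \<in> Ur}"
  define V where "V = msum (vec.span {u}) Ur"
  have Y_def': "Y = msum Ur (vec.span S)" unfolding Y_def Y_r_def S_def ..
  have Ur0: "0 \<in> Ur" using vec.subspace_0[OF sub] .
  have UrY: "w \<in> Y" if "w \<in> Ur" for w
    unfolding Y_def' msum_def using that vec.span_zero by force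
  have Rib: "Ri *v b \<in> vec.span S"
    unfolding S_def Ri_def by (rule vec.span_base) (use Ur0 in force)
  have RiAw: "Ri *v (A *v w) \<in> vec.span S" if "w \<in> Ur" for w
  proof -
    have "Ri *v (A *v w) = Ri *v b - Ri *v (b - A *v w)" by (simp add: matrix_vector_mult_diff_distrib)
    moreover have "Ri *v (b - A *v w) \<in> vec.span S"
      unfolding S_def Ri_def by (rule vec.span_base) (use that in force)
    ultimately show ?thesis using Rib vec.span_diff by metis
  qed
  have VY: "Ri *v (A *v x) \<in> Y" if xV: "x \<in> V" for x
  proof -
    obtain s w where x: "x = s + w" "s \<in> vec.span {u}" "w \<in> Ur" using xV unfolding V_def msum_def by blast
    obtain c where s: "s = c *s u" using x(2) unfolding vec.span_singleton by blast
    have "Ri *v (A *v x) = c *s (Ri *v b) + Ri *v (A *v w)"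
      using assms(3) by (simp add: x s matrix_vector_right_distrib mv_scale)
    hence "Ri *v (A *v x) \<in> vec.span S" using Rib RiAw[OF x(3)] vec.span_add vec.span_scale by metis
    thus ?thesis unfolding Y_def' msum_def using Ur0 by force
  qed
  have UrV: "w \<in> V" if "w \<in> Ur" for w
    unfolding V_def msum_def using that vec.span_zero by force
  have TH1: "norm (Th *v w) > 0 \<and> norm (Th *v w) \<le> sqrt (1 + eps) * normU R w
      \<and> sqrt (1 - eps) * normU R w \<le> norm (Th *v w)" if "w \<in> Ur - {0}" for w
  proof -
    have wY: "w \<in> Y" using UrY that by blast
    have nu: "normU R w > 0" using normU_pos[OF sa pd] that by blast
    have "norm (innU R w w - inn (Th *v w) (Th *v w)) \<le> eps * normU R w * normU R w"
      using H wY unfolding Y_def by blast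
    moreover have "innU R w w - inn (Th *v w) (Th *v w) = of_real ((normU R w)\<^sup>2 - (norm (Th *v w))\<^sup>2)"
      using innU_self[OF sa pd, of w] inn_self[of "Th *v w"] by simp
    ultimately have "norm (of_real ((normU R w)\<^sup>2 - (norm (Th *v w))\<^sup>2) :: 'a) \<le> eps * normU R w * normU R w"
      by metis
    hence d: "\<bar>(normU R w)\<^sup>2 - (norm (Th *v w))\<^sup>2\<bar> \<le> eps * (normU R w)\<^sup>2"
      by (simp only: norm_of_real power2_eq_square mult.assoc)
    hence up: "(norm (Th *v w))\<^sup>2 \<le> (sqrt (1 + eps) * normU R w)\<^sup>2"
      using assms(6) by (simp add: power_mult_distrib algebra_simps)
    have lo: "(sqrt (1 - eps) * normU R w)\<^sup>2 \<le> (norm (Th *v w))\<^sup>2"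
      using d assms(7) by (simp add: power_mult_distrib algebra_simps)
    have "(sqrt (1 - eps) * normU R w)\<^sup>2 > 0" using nu assms(7) by simp
    hence "norm (Th *v w) > 0" using lo by (metis norm_ge_zero order_less_le_trans zero_less_power2 less_eq_real_def power_zero_numeral zero_less_norm_iff)
    moreover have "norm (Th *v w) \<le> sqrt (1 + eps) * normU R w"
      using up by (rule power2_le_imp_le) (use nu assms(6) in simp)
    moreover have "sqrt (1 - eps) * normU R w \<le> norm (Th *v w)"
      using lo by (rule power2_le_imp_le) simp
    ultimately show ?thesis by blast
  qed
  have TH2: "\<bar>norm (inn (A *v x) w) - norm (inn (Th *v (Ri *v (A *v x))) (Th *v w))\<bar>
      \<le> eps * dualU R (A *v x) * normU R w" if "x \<in> V" "w \<in> Ur" for x w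
  proof -
    have "norm (innU R (Ri *v (A *v x)) w - inn (Th *v (Ri *v (A *v x))) (Th *v w))
       \<le> eps * normU R (Ri *v (A *v x)) * normU R w"
      using H VY[OF that(1)] UrY[OF that(2)] unfolding Y_def by blast
    moreover have "innU R (Ri *v (A *v x)) w = inn (A *v x) w" using K2[OF sa pd] Ri_def by metis
    moreover have "normU R (Ri *v (A *v x)) = dualU R (A *v x)" using K1[OF sa pd] Ri_def by metis
    ultimately show ?thesis using norm_triangle_ineq3 order_trans by fastforce
  qed
  have Wne: "Ur - {0} \<noteq> {}" using W_ne[OF sa pd sub ne] .
  obtain K where K0: "K \<ge> 0" and K: "\<And>x. dualU R (A *v x) \<le> K * normU R x"
    using K4[OF sa pd, of A] by blast
  have nUpos: "normU R x > 0" if "x \<noteq> 0" for x using normU_pos[OF sa pd] that by blast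
  have KB: "dualU R (A *v x) / normU R x \<le> K" if "x \<noteq> 0" for x
    using K[of x] nUpos[OF that] by (simp add: pos_divide_le_eq)
  let ?T = "\<lambda>y w. norm (inn (Th *v (Ri *v y)) (Th *v w)) / norm (Th *v w)"
  have Tup: "?T y w \<le> dualUrT R Th Ur y" if "w \<in> Ur - {0}" for y w
    unfolding Ri_def by (rule DUrT_upper[OF sa pd sub ne that])
  have Tnn: "0 \<le> dualUrT R Th Ur y" for y by (rule DUrT_nonneg[OF sa pd sub ne])
  have st1: "dualUr R Ur (A *v x) - eps * dualU R (A *v x) \<le> sqrt (1+eps) * dualUrT R Th Ur (A *v x)"
    if x: "x \<in> Ur" for x
  proof -
    let ?y = "A *v x"
    have "dualUr R Ur ?y \<le> sqrt (1+eps) * dualUrT R Th Ur ?y + eps * dualU R ?y"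
    proof (rule DUr_least[OF sa pd sub ne])
      fix w assume w: "w \<in> Ur - {0}"
      have t1: "norm (Th *v w) > 0" "norm (Th *v w) \<le> sqrt (1 + eps) * normU R w" using TH1[OF w] by auto
      have nu: "normU R w > 0" using w nUpos by blast
      let ?N = "norm (inn (Th *v (Ri *v ?y)) (Th *v w))"
      have a: "norm (inn ?y w) \<le> ?N + eps * dualU R ?y * normU R w"
        using TH2[OF UrV[OF x], of w] w by auto
      have "?N = ?T ?y w * norm (Th *v w)" using t1 by simp
      also have "\<dots> \<le> dualUrT R Th Ur ?y * norm (Th *v w)"
        by (rule mult_right_mono[OF Tup[OF w]]) simp
      also have "\<dots> \<le> dualUrT R Th Ur ?y * (sqrt (1 + eps) * normU R w)"
        by (rule mult_left_mono[OF t1(2) Tnn])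
      finally have "norm (inn ?y w) \<le> (sqrt (1+eps) * dualUrT R Th Ur ?y + eps * dualU R ?y) * normU R w"
        using a by (simp add: algebra_simps)
      thus "norm (inn ?y w) / normU R w \<le> sqrt (1+eps) * dualUrT R Th Ur ?y + eps * dualU R ?y"
        using nu by (simp add: pos_divide_le_eq)
    qed
    thus ?thesis by simp
  qed
  have al_lb: "alpha_r R A Ur \<le> dualUr R Ur (A *v x) / normU R x" if "x \<in> Ur - {0}" for x
    unfolding alpha_r_def
    by (rule cINF_lower[OF _ that], rule bdd_belowI2[where m=0])
       (simp add: DUr_nonneg[OF sa pd sub ne] normU_nonneg[OF sa pd])
  have al_nn: "0 \<le> alpha_r R A Ur"
    unfolding alpha_r_def
    by (rule cINF_greatest[OF Wne]) (simp add: DUr_nonneg[OF sa pd sub ne] normU_nonneg[OF sa pd])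
  have part1: "1 / sqrt (1 + eps) * (1 - eps * a_r R A Ur) * alpha_r R A Ur \<le> alpha_rT R Th A Ur"
    unfolding alpha_rT_def
  proof (rule cINF_greatest[OF Wne])
    fix x assume x: "x \<in> Ur - {0}"
    let ?al = "alpha_r R A Ur" and ?a = "a_r R A Ur"
    let ?D = "dualUr R Ur (A *v x)" and ?DT = "dualUrT R Th Ur (A *v x)" and ?n = "normU R x"
    have n: "?n > 0" using x nUpos by blast
    have s: "sqrt (1 + eps) > 0" using assms(6) by simp
    have RHS: "0 \<le> ?DT / ?n" using Tnn n by simp
    show "1 / sqrt (1 + eps) * (1 - eps * ?a) * ?al \<le> ?DT / ?n"
    proof (cases "?al = 0")
      case True thus ?thesis using RHS by simp
    next
      case False
      hence alp: "?al > 0" using al_nn by simp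
      have Dlb: "?al * normU R w \<le> dualUr R Ur (A *v w)" if "w \<in> Ur - {0}" for w
        using al_lb[OF that] nUpos[of w] that by (simp add: pos_le_divide_eq)
      have bdd: "bdd_above ((\<lambda>w. dualU R (A *v w) / dualUr R Ur (A *v w)) ` (Ur - {0}))"
      proof (rule bdd_aboveI2)
        fix w assume w: "w \<in> Ur - {0}"
        have nw: "normU R w > 0" using w nUpos by blast
        have dpos: "dualUr R Ur (A *v w) > 0" using Dlb[OF w] alp nw
          by (meson mult_pos_pos order_less_le_trans)
        have "dualU R (A *v w) * ?al \<le> K * normU R w * ?al"
          using K[of w] alp by (simp add: mult_right_mono)
        also have "\<dots> \<le> K * dualUr R Ur (A *v w)"
          using mult_left_mono[OF Dlb[OF w] K0] by (simp add: mult_ac)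
        finally show "dualU R (A *v w) / dualUr R Ur (A *v w) \<le> K / ?al"
          using dpos alp by (simp add: field_simps)
      qed
      have Dpos: "?D > 0" using Dlb[OF x] alp n by (meson mult_pos_pos order_less_le_trans)
      have "dualU R (A *v x) / ?D \<le> ?a"
        unfolding a_r_def by (rule cSUP_upper[OF x bdd])
      hence du: "dualU R (A *v x) \<le> ?a * ?D" using Dpos by (simp add: divide_le_eq)
      have key: "(1 - eps * ?a) * ?D \<le> sqrt (1+eps) * ?DT"
      proof -
        have "eps * dualU R (A *v x) \<le> eps * (?a * ?D)" by (rule mult_left_mono[OF du assms(6)])
        thus ?thesis using st1[of x] x by (simp add: algebra_simps)
      qed
      show ?thesis
      proof (cases "1 - eps * ?a \<ge> 0")
        case False
        hence "1 / sqrt (1 + eps) * (1 - eps * ?a) * ?al \<le> 0"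
        proof -
          have "(1 - eps * ?a) * ?al \<le> 0" using False alp by (simp add: mult_nonpos_nonneg)
          thus ?thesis using s by (simp add: divide_nonpos_pos)
        qed
        thus ?thesis using RHS by linarith
      next
        case True
        have "(1 - eps * ?a) * ?al \<le> (1 - eps * ?a) * (?D / ?n)"
          by (rule mult_left_mono[OF al_lb[OF x] True])
        also have "\<dots> \<le> sqrt (1+eps) * ?DT / ?n" using key n by (simp add: divide_right_mono)
        finally have "(1 - eps * ?a) * ?al \<le> sqrt (1+eps) * (?DT / ?n)" by simp
        thus ?thesis using s by (simp add: field_simps)
      qed
    qed
  qed
  have part2: "beta_rT R Th A u Ur \<le> 1 / sqrt (1 - eps) * (beta_r R A u Ur + eps * beta_full R A)"
    unfolding beta_rT_def V_def[symmetric]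
  proof (rule cSUP_least)
    show "V - {0} \<noteq> {}" using Wne UrV by blast
  next
    fix x assume x: "x \<in> V - {0}"
    let ?y = "A *v x"
    let ?D = "dualUr R Ur (A *v x)" and ?DT = "dualUrT R Th Ur (A *v x)" and ?n = "normU R x"
    let ?dU = "dualU R (A *v x)"
    have n: "?n > 0" using x nUpos by blast
    have s: "sqrt (1 - eps) > 0" using assms(7) by simp
    have st2: "?DT \<le> (?D + eps * ?dU) / sqrt (1 - eps)"
    proof (rule DUrT_least[OF sa pd sub ne])
      fix w assume w: "w \<in> Ur - {0}"
      have t1: "norm (Th *v w) > 0" "sqrt (1 - eps) * normU R w \<le> norm (Th *v w)" using TH1[OF w] by auto
      have nu: "normU R w > 0" using w nUpos by blast
      let ?N = "norm (inn (Th *v (matrix_inv R *v ?y)) (Th *v w))"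
      have a: "?N \<le> norm (inn ?y w) + eps * ?dU * normU R w"
        using TH2[OF _, of x w] x w unfolding Ri_def by auto
      have "norm (inn ?y w) / normU R w \<le> ?D" by (rule DUr_upper[OF sa pd sub ne w])
      hence "norm (inn ?y w) \<le> ?D * normU R w" using nu by (simp add: pos_divide_le_eq)
      hence b: "?N \<le> (?D + eps * ?dU) * normU R w" using a by (simp add: algebra_simps)
      have c0: "?D + eps * ?dU \<ge> 0"
        using DUr_nonneg[OF sa pd sub ne] dualU_nonneg[OF sa pd] assms(6) by (simp add: add_nonneg_nonneg)
      have "?N / norm (Th *v w) \<le> (?D + eps * ?dU) * normU R w / norm (Th *v w)"
        using b t1 by (simp add: divide_right_mono)
      also have "\<dots> \<le> (?D + eps * ?dU) * normU R w / (sqrt (1 - eps) * normU R w)"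
        by (rule divide_left_mono[OF t1(2)]) (use c0 nu s t1 in auto)
      also have "\<dots> = (?D + eps * ?dU) / sqrt (1 - eps)" using nu by simp
      finally show "?N / norm (Th *v w) \<le> (?D + eps * ?dU) / sqrt (1 - eps)" .
    qed
    have b1: "?D / ?n \<le> beta_r R A u Ur"
      unfolding beta_r_def V_def[symmetric]
    proof (rule cSUP_upper[OF x], rule bdd_aboveI2)
      fix z assume z: "z \<in> V - {0}"
      have "dualUr R Ur (A *v z) / normU R z \<le> dualU R (A *v z) / normU R z"
        using DUr_le[OF sa pd sub ne] nUpos[of z] z by (simp add: divide_right_mono)
      also have "\<dots> \<le> K" using KB z by blast
      finally show "dualUr R Ur (A *v z) / normU R z \<le> K" .
    qed
    have b2: "?dU / ?n \<le> beta_full R A"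
      unfolding beta_full_def
      by (rule cSUP_upper, use x in simp, rule bdd_aboveI2, use KB in auto)
    have "?DT / ?n \<le> (?D + eps * ?dU) / sqrt (1 - eps) / ?n"
      using divide_right_mono[OF st2, of ?n] n by simp
    also have "\<dots> = (?D / ?n + eps * (?dU / ?n)) / sqrt (1 - eps)" using n by (simp add: field_simps)
    also have "\<dots> \<le> (beta_r R A u Ur + eps * beta_full R A) / sqrt (1 - eps)"
      using b1 b2 s assms(6) by (intro divide_right_mono add_mono mult_left_mono) auto
    finally show "?DT / ?n \<le> 1 / sqrt (1 - eps) * (beta_r R A u Ur + eps * beta_full R A)" by simp
  qed
  show ?thesis using part1 part2 by simp
qed


end
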